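(* Let $k\ge 3$, let $i,i'$ be two distinct vertices and $c,c'\in[k]$. Let $H=H(i,i',c,c')$ be the partially pre-coloured graph built as follows: take two disjoint $k$-cliques with vertices $l_1,\dots,l_k$ and $r_1,\dots,r_k$; add the edge $\{i,l_1\}$; add a new vertex $w$, pre-coloured with colour $c$, adjacent to $l_2,\dots,l_{k-1}$; add the edge $\{i',r_1\}$; add a new vertex $w'$, pre-coloured with colour $c'$, adjacent to $r_2,\dots,r_{k-1}$; finally, if $c=c'$ add the edge $\{l_k,r_k\}$, and if $c\neq c'$ identify $l_k$ and $r_k$ into a single vertex. Then: (1) $H$ has $O(k)$ vertices; (2) $H$ has two pre-coloured vertices, each of degree $O(k)$; (3) for every pair $(b,b')\in[k]^2$ with $(b,b')\neq(c,c')$ there is a legal $k$-colouring $\chi$ of $H$ extending the pre-colouring with $\chi(i)=b$ and $\chi(i')=b'$, while no legal $k$-colouring of $H$ extending the pre-colouring has $\chi(i)=c$ and $\chi(i')=c'$.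
   Context: A legal $k$-colouring of a graph is a map from its vertices to $[k]$ assigning distinct colours to the endpoints of every edge; it extends a pre-colouring if it agrees with the prescribed colours on the pre-coloured vertices. *)

theory Defs
  imports Main
begin

definition legal_colouring :: "nat \<Rightarrow> 'v set \<Rightarrow> 'v set set \<Rightarrow> ('v \<Rightarrow> nat) \<Rightarrow> bool" where
  "legal_colouring k V E \<chi> \<longleftrightarrow>
     (\<forall>v\<in>V. \<chi> v \<in> {1..k}) \<and> (\<forall>x y. {x, y} \<in> E \<longrightarrow> x \<noteq> y \<longrightarrow> \<chi> x \<noteq> \<chi> y)"

definition extends_precol :: "('v \<rightharpoonup> nat) \<Rightarrow> ('v \<Rightarrow> nat) \<Rightarrow> bool" where
  "extends_precol pc \<chi> \<longleftrightarrow> (\<forall>v c. pc v = Some c \<longrightarrow> \<chi> v = c)"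

definition degree :: "'v set set \<Rightarrow> 'v \<Rightarrow> nat" where
  "degree E v = card {e\<in>E. v \<in> e}"

datatype hv = Vi | Vi' | Lv nat | Rv nat | Wv | Wv'

definition rv :: "nat \<Rightarrow> nat \<Rightarrow> nat \<Rightarrow> nat \<Rightarrow> hv" where
  "rv k c c' j = (if c \<noteq> c' \<and> j = k then Lv k else Rv j)"

definition H_verts :: "nat \<Rightarrow> nat \<Rightarrow> nat \<Rightarrow> hv set" where
  "H_verts k c c' = {Vi, Vi', Wv, Wv'} \<union> Lv ` {1..k} \<union> rv k c c' ` {1..k}"

definition H_edges :: "nat \<Rightarrow> nat \<Rightarrow> nat \<Rightarrow> hv set set" where
  "H_edges k c c' =
     {{Lv a, Lv b} | a b. a \<in> {1..k} \<and> b \<in> {1..k} \<and> a \<noteq> b}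
   \<union> {{rv k c c' a, rv k c c' b} | a b. a \<in> {1..k} \<and> b \<in> {1..k} \<and> a \<noteq> b}
   \<union> {{Vi, Lv 1}}
   \<union> {{Wv, Lv j} | j. j \<in> {2..k-1}}
   \<union> {{Vi', rv k c c' 1}}
   \<union> {{Wv', rv k c c' j} | j. j \<in> {2..k-1}}
   \<union> (if c = c' then {{Lv k, Rv k}} else {})"

definition H_precol :: "nat \<Rightarrow> nat \<Rightarrow> hv \<rightharpoonup> nat" where
  "H_precol c c' = [Wv \<mapsto> c, Wv' \<mapsto> c']"

end

theory Submission
  imports Defs
begin

lemma perm_exists:
  fixes k :: nat
  assumes "p \<noteq> q" "p \<in> {1..k}" "q \<in> {1..k}"
  shows "\<exists>g. inj_on g {1..k} \<and> g ` {1..k} \<subseteq> {1..k} \<and> g 1 = p \<and> g k = q"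
proof -
  have k2: "k \<ge> 2" using assms by auto
  have "card {2..k-1} = card ({1..k} - {p,q})"
    using assms k2 by (simp add: card_Diff_subset)
  then obtain h where h: "bij_betw h {2..k-1} ({1..k} - {p,q})"
    by (metis finite_atLeastAtMost finite_Diff finite_same_card_bij)
  define g where "g j = (if j = 1 then p else if j = k then q else h j)" for j
  have img: "g j \<in> {1..k} - {p,q}" if "j \<in> {2..k-1}" for j
    using that h bij_betwE[OF h] unfolding g_def by auto
  have g1: "g 1 = p" and gk: "g k = q" using k2 unfolding g_def by auto
  have gm: "g j = h j" if "j \<in> {2..k-1}" for j using that unfolding g_def by auto
  have cls: "j = 1 \<or> j = k \<or> j \<in> {2..k-1}" if "j \<in> {1..k}" for j using that by auto
  have "inj_on g {1..k}"
  proof (rule inj_onI)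
    fix x y assume xy: "x \<in> {1..k}" "y \<in> {1..k}" "g x = g y"
    show "x = y"
    proof (cases "x \<in> {2..k-1} \<and> y \<in> {2..k-1}")
      case True
      then have "h x = h y" using xy gm by metis
      then show ?thesis using True bij_betw_imp_inj_on[OF h] by (meson inj_onD)
    next
      case False
      then show ?thesis using xy img[of x] img[of y] assms cls[OF xy(1)] cls[OF xy(2)] g1 gk
        by auto
    qed
  qed
  moreover have "g ` {1..k} \<subseteq> {1..k}"
  proof
    fix y assume "y \<in> g ` {1..k}"
    then obtain j where j: "j \<in> {1..k}" "y = g j" by auto
    show "y \<in> {1..k}"
    proof (cases "j \<in> {2..k-1}")
      case True then show ?thesis using img j by auto
    next
      case False then have "j = 1 \<or> j = k" using j by auto
      then show ?thesis using j assms unfolding g_def by auto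
    qed
  qed
  moreover have "g 1 = p" "g k = q" using k2 unfolding g_def by auto
  ultimately show ?thesis by blast
qed

lemma rv_eq: "rv k c c' j = Lv k \<or> rv k c c' j = Rv j"
  unfolding rv_def by auto

lemma colour_ok:
  assumes k: "k \<ge> 3"
    and gL: "inj_on gL {1..k}" "gL ` {1..k} \<subseteq> {1..k}"
    and gR: "inj_on gR {1..k}" "gR ` {1..k} \<subseteq> {1..k}"
    and bL: "gL 1 \<noteq> b" and bR: "gR 1 \<noteq> b'"
    and cL: "c = gL 1 \<or> c = gL k" and cR: "c' = gR 1 \<or> c' = gR k"
    and eq1: "c = c' \<Longrightarrow> gL k \<noteq> gR k"
    and eq2: "c \<noteq> c' \<Longrightarrow> gL k = gR k"
    and rng: "b \<in> {1..k}" "b' \<in> {1..k}" "c \<in> {1..k}" "c' \<in> {1..k}"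
  shows "legal_colouring k (H_verts k c c') (H_edges k c c') (case_hv b b' gL gR c c')"
proof -
  let ?x = "case_hv b b' gL gR c c'"
  have rvc: "?x (rv k c c' j) = gR j" for j
    using eq2 unfolding rv_def by auto
  have L: "gL a \<noteq> gL a'" if "a \<in> {1..k}" "a' \<in> {1..k}" "a \<noteq> a'" for a a'
    using gL(1) that by (meson inj_onD)
  have R: "gR a \<noteq> gR a'" if "a \<in> {1..k}" "a' \<in> {1..k}" "a \<noteq> a'" for a a'
    using gR(1) that by (meson inj_onD)
  have WL: "gL j \<noteq> c" if "j \<in> {2..k-1}" for j
  proof -
    have "j \<in> {1..k}" "j \<noteq> 1" "j \<noteq> k" using that k by auto
    then show ?thesis using cL L[of j 1] L[of j k] k by auto
  qed
  have WR: "gR j \<noteq> c'" if "j \<in> {2..k-1}" for j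
  proof -
    have "j \<in> {1..k}" "j \<noteq> 1" "j \<noteq> k" using that k by auto
    then show ?thesis using cR R[of j 1] R[of j k] k by auto
  qed
  have verts: "\<forall>v\<in>H_verts k c c'. ?x v \<in> {1..k}"
    unfolding H_verts_def using rng gL(2) gR(2) rvc by auto
  have edges: "?x x \<noteq> ?x y" if e: "{x, y} \<in> H_edges k c c'" "x \<noteq> y" for x y
  proof -
    from e(1) consider
        (a) a b where "{x,y} = {Lv a, Lv b}" "a \<in> {1..k}" "b \<in> {1..k}" "a \<noteq> b"
      | (b) a b where "{x,y} = {rv k c c' a, rv k c c' b}" "a \<in> {1..k}" "b \<in> {1..k}" "a \<noteq> b"
      | (c) "{x,y} = {Vi, Lv 1}"
      | (d) j where "{x,y} = {Wv, Lv j}" "j \<in> {2..k-1}"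
      | (e) "{x,y} = {Vi', rv k c c' 1}"
      | (f) j where "{x,y} = {Wv', rv k c c' j}" "j \<in> {2..k-1}"
      | (g) "c = c'" "{x,y} = {Lv k, Rv k}"
      unfolding H_edges_def by (auto split: if_splits)
    then show ?thesis
    proof cases
      case (a a b) then show ?thesis using L[of a b] by (auto simp: doubleton_eq_iff)
    next
      case (b a b) then show ?thesis using R[of a b] rvc[of a] rvc[of b]
        by (auto simp: doubleton_eq_iff)
    next
      case c then show ?thesis using bL by (auto simp: doubleton_eq_iff)
    next
      case (d j) then show ?thesis using WL[of j] by (auto simp: doubleton_eq_iff)
    next
      case e then show ?thesis using bR rvc[of 1] by (auto simp: doubleton_eq_iff)
    next
      case (f j) then show ?thesis using WR[of j] rvc[of j] by (auto simp: doubleton_eq_iff)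
    next
      case g then show ?thesis using eq1 by (auto simp: doubleton_eq_iff)
    qed
  qed
  show ?thesis unfolding legal_colouring_def using verts edges by blast
qed

lemma side_choice:
  fixes k :: nat
  assumes "k \<ge> 3" "b \<in> {1..k}" "c \<in> {1..k}" "q \<in> {1..k}" "b = c \<Longrightarrow> q = c"
  shows "\<exists>p. p \<in> {1..k} \<and> p \<noteq> q \<and> p \<noteq> b \<and> (c = p \<or> c = q)"
proof (cases "q = c")
  case True
  have "\<exists>p\<in>{1..k}. p \<notin> {b, c}"
  proof (rule ccontr)
    assume "\<not> ?thesis"
    then have "{1..k} \<subseteq> {b,c}" by auto
    then have "card {1..k} \<le> card {b,c}" by (intro card_mono) auto
    also have "\<dots> \<le> 2" by (simp add: card_insert_le_m1)
    finally show False using assms by simp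
  qed
  then show ?thesis using True by auto
next
  case False
  then show ?thesis using assms by auto
qed

lemma positive:
  assumes k: "k \<ge> 3" and rng: "b \<in> {1..k}" "b' \<in> {1..k}" "c \<in> {1..k}" "c' \<in> {1..k}"
    and ne: "(b, b') \<noteq> (c, c')"
  shows "\<exists>\<chi>. legal_colouring k (H_verts k c c') (H_edges k c c') \<chi>
                   \<and> extends_precol (H_precol c c') \<chi> \<and> \<chi> Vi = b \<and> \<chi> Vi' = b'"
proof -
  define oth where "oth = (if c = 1 then 2 else (1::nat))"
  have oth: "oth \<in> {1..k}" "oth \<noteq> c" using k unfolding oth_def by auto
  obtain qL qR where q: "qL \<in> {1..k}" "qR \<in> {1..k}" "b = c \<Longrightarrow> qL = c" "b' = c' \<Longrightarrow> qR = c'"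
     "c = c' \<Longrightarrow> qL \<noteq> qR" "c \<noteq> c' \<Longrightarrow> qL = qR"
  proof (cases "c = c'")
    case True
    show ?thesis
    proof (cases "b = c")
      case True
      then show ?thesis using that[of c oth] oth rng ne \<open>c = c'\<close> by auto
    next
      case False
      then show ?thesis using that[of oth c] oth rng ne \<open>c = c'\<close> by auto
    qed
  next
    case False
    show ?thesis
    proof (cases "b = c")
      case True
      then show ?thesis using that[of c c] rng ne False by auto
    next
      case f2: False
      then show ?thesis using that[of c' c'] rng ne False by auto
    qed
  qed
  obtain pL where pL: "pL \<in> {1..k}" "pL \<noteq> qL" "pL \<noteq> b" "c = pL \<or> c = qL"
    using side_choice[OF k rng(1) rng(3) q(1) q(3)] by blast
  obtain pR where pR: "pR \<in> {1..k}" "pR \<noteq> qR" "pR \<noteq> b'" "c' = pR \<or> c' = qR"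
    using side_choice[OF k rng(2) rng(4) q(2) q(4)] by blast
  obtain gL where gL: "inj_on gL {1..k}" "gL ` {1..k} \<subseteq> {1..k}" "gL 1 = pL" "gL k = qL"
    using perm_exists[OF pL(2) pL(1) q(1)] by blast
  obtain gR where gR: "inj_on gR {1..k}" "gR ` {1..k} \<subseteq> {1..k}" "gR 1 = pR" "gR k = qR"
    using perm_exists[OF pR(2) pR(1) q(2)] by blast
  have "legal_colouring k (H_verts k c c') (H_edges k c c') (case_hv b b' gL gR c c')"
    apply (rule colour_ok[OF k gL(1,2) gR(1,2)])
    using gL gR pL pR q rng by auto
  moreover have "extends_precol (H_precol c c') (case_hv b b' gL gR c c')"
    unfolding extends_precol_def H_precol_def by auto
  ultimately show ?thesis by fastforce
qed

lemma forced:
  assumes k: "k \<ge> 3" and leg: "legal_colouring k (H_verts k c c') (H_edges k c c') \<chi>"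
    and ext: "extends_precol (H_precol c c') \<chi>"
    and i: "\<chi> Vi = c" "\<chi> Vi' = c'" and rng: "c \<in> {1..k}" "c' \<in> {1..k}"
  shows "\<chi> (Lv k) = c \<and> \<chi> (rv k c c' k) = c'"
proof -
  have w: "\<chi> Wv = c" "\<chi> Wv' = c'" using ext unfolding extends_precol_def H_precol_def by auto
  have E: "\<chi> x \<noteq> \<chi> y" if "{x,y} \<in> H_edges k c c'" "x \<noteq> y" for x y
    using leg that unfolding legal_colouring_def by blast
  have V: "\<chi> v \<in> {1..k}" if "v \<in> H_verts k c c'" for v
    using leg that unfolding legal_colouring_def by blast
  have gen: "\<exists>j\<in>{1..k}. \<chi> (f j) = d"
    if inj: "inj_on f {1..k}" and cl: "\<And>a b. a \<in> {1..k} \<Longrightarrow> b \<in> {1..k} \<Longrightarrow> a \<noteq> b \<Longrightarrow> \<chi> (f a) \<noteq> \<chi> (f b)"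
      and inV: "\<And>a. a \<in> {1..k} \<Longrightarrow> \<chi> (f a) \<in> {1..k}" and d: "d \<in> {1..k}" for f d
  proof -
    have "inj_on (\<chi> \<circ> f) {1..k}" using cl unfolding inj_on_def by (metis comp_apply)
    moreover have "(\<chi> \<circ> f) ` {1..k} \<subseteq> {1..k}" using inV by auto
    ultimately have "(\<chi> \<circ> f) ` {1..k} = {1..k}" by (metis endo_inj_surj finite_atLeastAtMost)
    then show ?thesis using d by (metis comp_apply imageE)
  qed
  have "\<exists>j\<in>{1..k}. \<chi> (Lv j) = c"
    apply (rule gen[of Lv])
    subgoal by (simp add: inj_on_def)
    subgoal for a b by (rule E) (auto simp: H_edges_def)
    subgoal by (rule V) (auto simp: H_verts_def)
    by (rule rng)
  then obtain j where j: "j \<in> {1..k}" "\<chi> (Lv j) = c" by blast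
  have "j \<noteq> 1" using E[of Vi "Lv 1"] i j by (auto simp: H_edges_def)
  moreover have "j \<notin> {2..k-1}" using E[of Wv "Lv j"] w j by (auto simp: H_edges_def)
  ultimately have "j = k" using j by auto
  with j have left: "\<chi> (Lv k) = c" by simp
  have injr: "inj_on (rv k c c') {1..k}" by (auto simp: inj_on_def rv_def split: if_splits)
  have "\<exists>j\<in>{1..k}. \<chi> (rv k c c' j) = c'"
    apply (rule gen[OF injr])
    subgoal for a b apply (rule E) apply (auto simp: H_edges_def)
      apply (auto simp: rv_def split: if_splits) done
    subgoal by (rule V) (auto simp: H_verts_def)
    by (rule rng)
  then obtain j' where j': "j' \<in> {1..k}" "\<chi> (rv k c c' j') = c'" by blast
  have "j' \<noteq> 1" using E[of Vi' "rv k c c' 1"] i j' k by (auto simp: H_edges_def rv_def)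
  moreover have "j' \<notin> {2..k-1}"
  proof
    assume jm: "j' \<in> {2..k-1}"
    have "{Wv', rv k c c' j'} \<in> H_edges k c c'" using jm unfolding H_edges_def by blast
    moreover have "Wv' \<noteq> rv k c c' j'" by (simp add: rv_def)
    ultimately show False using E w j' by metis
  qed
  ultimately have "j' = k" using j' by auto
  with j' left show ?thesis by simp
qed

lemma negative:
  assumes k: "k \<ge> 3" and rng: "c \<in> {1..k}" "c' \<in> {1..k}"
  shows "\<not> (\<exists>\<chi>. legal_colouring k (H_verts k c c') (H_edges k c c') \<chi>
                   \<and> extends_precol (H_precol c c') \<chi> \<and> \<chi> Vi = c \<and> \<chi> Vi' = c')"
proof
  assume "\<exists>\<chi>. legal_colouring k (H_verts k c c') (H_edges k c c') \<chi>
                   \<and> extends_precol (H_precol c c') \<chi> \<and> \<chi> Vi = c \<and> \<chi> Vi' = c'"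
  then obtain \<chi> where h: "legal_colouring k (H_verts k c c') (H_edges k c c') \<chi>"
     "extends_precol (H_precol c c') \<chi>" "\<chi> Vi = c" "\<chi> Vi' = c'" by blast
  from forced[OF k h rng] have f: "\<chi> (Lv k) = c" "\<chi> (rv k c c' k) = c'" by auto
  show False
  proof (cases "c = c'")
    case True
    have "{Lv k, Rv k} \<in> H_edges k c c'" using True by (simp add: H_edges_def)
    then have "\<chi> (Lv k) \<noteq> \<chi> (Rv k)" using h(1) unfolding legal_colouring_def by blast
    then show False using f True by (simp add: rv_def)
  next
    case False
    then show False using f by (simp add: rv_def)
  qed
qed

lemma size_part:
  assumes k: "k \<ge> 3"
  shows "finite (H_verts k c c') \<and> card (H_verts k c c') \<le> 6 * k
          \<and> card (dom (H_precol c c')) = 2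
          \<and> (\<forall>v\<in>dom (H_precol c c'). degree (H_edges k c c') v \<le> 6 * k)"
proof -
  have fin: "finite (H_verts k c c')" unfolding H_verts_def by auto
  have "card (H_verts k c c') \<le> card {Vi, Vi', Wv, Wv'} + card (Lv ` {1..k}) + card (rv k c c' ` {1..k})"
    unfolding H_verts_def by (metis (no_types, lifting) card_Un_le add_le_mono order_trans le_refl)
  also have "\<dots> \<le> 4 + k + k"
    using card_image_le[of "{1..k}" Lv] card_image_le[of "{1..k}" "rv k c c'"]
    by (intro add_mono) (auto simp: card_insert_le_m1 intro: order_trans[OF card_insert_le_m1])
  also have "\<dots> \<le> 6 * k" using k by simp
  finally have c1: "card (H_verts k c c') \<le> 6 * k" .
  have dom: "dom (H_precol c c') = {Wv, Wv'}" unfolding H_precol_def by auto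
  have d1: "degree (H_edges k c c') Wv \<le> 6 * k"
  proof -
    have "{e\<in>H_edges k c c'. Wv \<in> e} \<subseteq> (\<lambda>j. {Wv, Lv j}) ` {2..k-1}"
      unfolding H_edges_def using rv_eq by (auto split: if_splits) (metis hv.distinct)+
    then have "card {e\<in>H_edges k c c'. Wv \<in> e} \<le> card ((\<lambda>j. {Wv, Lv j}) ` {2..k-1})"
      by (intro card_mono) auto
    also have "\<dots> \<le> card {2..k-1}" by (rule card_image_le) auto
    also have "\<dots> \<le> 6 * k" by simp
    finally show ?thesis unfolding degree_def .
  qed
  have d2: "degree (H_edges k c c') Wv' \<le> 6 * k"
  proof -
    have "{e\<in>H_edges k c c'. Wv' \<in> e} \<subseteq> (\<lambda>j. {Wv', rv k c c' j}) ` {2..k-1}"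
      unfolding H_edges_def using rv_eq by (auto split: if_splits) (metis hv.distinct)+
    then have "card {e\<in>H_edges k c c'. Wv' \<in> e} \<le> card ((\<lambda>j. {Wv', rv k c c' j}) ` {2..k-1})"
      by (intro card_mono) auto
    also have "\<dots> \<le> card {2..k-1}" by (rule card_image_le) auto
    also have "\<dots> \<le> 6 * k" by simp
    finally show ?thesis unfolding degree_def .
  qed
  show ?thesis using fin c1 dom d1 d2 by auto
qed

theorem claim3p2:
  shows "(\<exists>C::nat. \<forall>k c c'. k \<ge> 3 \<longrightarrow> c \<in> {1..k} \<longrightarrow> c' \<in> {1..k} \<longrightarrow>
            finite (H_verts k c c') \<and> card (H_verts k c c') \<le> C * k
          \<and> card (dom (H_precol c c')) = 2
          \<and> (\<forall>v\<in>dom (H_precol c c'). degree (H_edges k c c') v \<le> C * k))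
     \<and> (\<forall>k c c'. k \<ge> 3 \<longrightarrow> c \<in> {1..k} \<longrightarrow> c' \<in> {1..k} \<longrightarrow>
            (\<forall>b b'. b \<in> {1..k} \<longrightarrow> b' \<in> {1..k} \<longrightarrow> (b, b') \<noteq> (c, c') \<longrightarrow>
               (\<exists>\<chi>. legal_colouring k (H_verts k c c') (H_edges k c c') \<chi>
                   \<and> extends_precol (H_precol c c') \<chi> \<and> \<chi> Vi = b \<and> \<chi> Vi' = b'))
          \<and> \<not> (\<exists>\<chi>. legal_colouring k (H_verts k c c') (H_edges k c c') \<chi>
                   \<and> extends_precol (H_precol c c') \<chi> \<and> \<chi> Vi = c \<and> \<chi> Vi' = c'))"
  using size_part positive negative by blast

end
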